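(* Let $p$ be an odd prime and let $s$ be an integer with $0\le s\le\frac{p-1}{2}$. Then $$\sum_{k=0}^{\frac{p-1}{2}}\frac{(q;q^2)_k\,(q;q^2)_{k+s}}{(q^2;q^2)_k\,(q^2;q^2)_{k+s}}\equiv \left(\frac{-1}{p}\right)q^{\frac{1-p^2}{4}}\pmod{[p]^2}.$$
   Context: For an indeterminate $q$ and an integer $n\ge 0$: $(a;q)_0=1$ and $(a;q)_n=(1-a)(1-aq)\cdots(1-aq^{n-1})$. For a positive integer $p$, $[p]=\frac{1-q^p}{1-q}=1+q+\cdots+q^{p-1}$. For a prime $p$, $[p]$ is irreducible in $\mathbb{Q}[q]$; for rational functions $A,B$ of $q$ whose denominators are coprime to $[p]$, $A\equiv B\pmod{[p]^r}$ means that $A-B$, written in lowest terms, has numerator divisible by $[p]^r$ in $\mathbb{Q}[q]$. $\left(\frac{\cdot}{p}\right)$ denotes the Legendre symbol modulo $p$. *)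

theory Defs
  imports "HOL-Computational_Algebra.Computational_Algebra" "HOL-Computational_Algebra.Field_as_Ring" "HOL-Number_Theory.Number_Theory"
begin

type_synonym ratfun = "rat poly fract"

definition qv :: ratfun where
  "qv = to_fract [:0, 1:]"

definition qpoch :: "ratfun \<Rightarrow> ratfun \<Rightarrow> nat \<Rightarrow> ratfun" where
  "qpoch a x n = (\<Prod>i<n. (1 - a * x ^ i))"

definition qint :: "nat \<Rightarrow> rat poly" where
  "qint p = (\<Sum>i<p. [:0, 1:] ^ i)"

definition qcong :: "ratfun \<Rightarrow> ratfun \<Rightarrow> rat poly \<Rightarrow> bool" where
  "qcong A B M \<longleftrightarrow> coprime (snd (quot_of_fract A)) M \<and> coprime (snd (quot_of_fract B)) M
      \<and> M dvd fst (quot_of_fract (A - B))"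

end

theory Submission
  imports Defs
begin

lemma qpoch_0 [simp]: "qpoch a x 0 = 1" by (simp add: qpoch_def)
lemma qpoch_Suc [simp]: "qpoch a x (Suc n) = qpoch a x n * (1 - a * x ^ n)"
  by (simp add: qpoch_def)

lemma tele_alg:
  fixes A B C D x y a b Q :: "'a::field"
  assumes Q: "a*b = Q" and nz: "C\<noteq>0" "D\<noteq>0" "1-a\<noteq>0" "1-b*y\<noteq>0" "1-Q*x\<noteq>0" "1-Q*(x*y)\<noteq>0"
  shows "(A*(1-a*x)*(B*(1-b*(x*y)))/(C*(1-Q*x)*(D*(1-Q*(x*y))))) * (1-Q*x) * (y*(b-Q)/((1-a)*(1-b*y)))
     - (A*B/(C*D))*(1-x)*(y*(b-Q)/((1-a)*(1-b*y))) = A*B/(C*D) - A*(B*(1-b*(x*y)))/(C*(D*(1-Q*(x*y))))"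
proof -
  define g where "g = y*(b-Q)/((1-a)*(1-b*y))"
  define E where "E = A*B/(C*D)"
  define w where "w = 1-Q*x"
  define z where "z = 1-Q*(x*y)"
  have w: "w \<noteq> 0" and z: "z\<noteq>0" using nz unfolding w_def z_def by auto
  have k: "(1-a*x)*(1-b*(x*y)) - (1-x)*z = x*((1-a)*(1-b*y))"
    unfolding Q[symmetric] z_def by (simp add: algebra_simps)
  have l1: "(A*(1-a*x)*(B*(1-b*(x*y)))/(C*w*(D*z))) * w = E*((1-a*x)*(1-b*(x*y)))/z"
    using nz w z unfolding E_def by (simp add: field_simps)
  have l2: "A*(B*(1-b*(x*y)))/(C*(D*z)) = E*(1-b*(x*y))/z"
    unfolding E_def by (simp add: field_simps)
  have "E*((1-a*x)*(1-b*(x*y)))/z * g - E*(1-x)*g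
      = E*g*(((1-a*x)*(1-b*(x*y)) - (1-x)*z)/z)"
    using z by (simp add: field_simps)
  also have "\<dots> = E*g*(x*((1-a)*(1-b*y)))/z" by (simp add: k)
  also have "\<dots> = E*(x*(g*((1-a)*(1-b*y))))/z" by (simp add: ac_simps)
  also have "g*((1-a)*(1-b*y)) = y*(b-Q)" unfolding g_def using nz by simp
  also have "E*(x*(y*(b-Q)))/z = E*(x*y*(b-Q))/z" by (simp add: ac_simps)
  also have "\<dots> = E - E*(1-b*(x*y))/z" using z Q unfolding z_def by (simp add: field_simps)
  finally show ?thesis unfolding l1 l2 g_def[symmetric] E_def[symmetric] w_def[symmetric] z_def[symmetric] .
qed

definition tt :: "ratfun \<Rightarrow> ratfun \<Rightarrow> ratfun \<Rightarrow> nat \<Rightarrow> nat \<Rightarrow> ratfun" where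
  "tt a b Q s k = qpoch a Q k * qpoch b Q (k + s) / (qpoch Q Q k * qpoch Q Q (k + s))"

lemma qpochQ_nz:
  assumes H: "\<forall>m>0. Q ^ m \<noteq> (1::ratfun)"
  shows "qpoch Q Q j \<noteq> 0"
proof -
  have "\<forall>i<j. 1 - Q * Q ^ i \<noteq> 0"
  proof (intro allI impI)
    fix i assume "i < j"
    have "Q ^ Suc i \<noteq> 1" using H by blast
    thus "1 - Q * Q ^ i \<noteq> 0" by simp
  qed
  thus ?thesis unfolding qpoch_def by (simp add: prod_zero_iff)
qed

lemma tele:
  assumes ab: "a * b = Q" and a1: "a \<noteq> 1" and bs: "b * Q ^ s \<noteq> 1" and H: "\<forall>m>0. Q ^ m \<noteq> (1::ratfun)"
  shows "(\<Sum>k<m. tt a b Q s k - tt a b Q (Suc s) k)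
     = tt a b Q s m * (1 - Q ^ m) * (Q ^ s * (b - Q) / ((1 - a) * (1 - b * Q ^ s)))"
proof (induction m)
  case 0
  then show ?case by simp
next
  case (Suc m)
  let ?g = "Q ^ s * (b - Q) / ((1 - a) * (1 - b * Q ^ s))"
  have e1: "tt a b Q s (Suc m) = qpoch a Q m * (1 - a * Q^m) * (qpoch b Q (m+s) * (1 - b * (Q^m * Q^s)))
      / (qpoch Q Q m * (1 - Q * Q^m) * (qpoch Q Q (m+s) * (1 - Q * (Q^m*Q^s))))"
    by (simp add: tt_def power_add)
  have e2: "tt a b Q (Suc s) m = qpoch a Q m * (qpoch b Q (m+s) * (1 - b * (Q^m * Q^s)))
      / (qpoch Q Q m * (qpoch Q Q (m+s) * (1 - Q * (Q^m*Q^s))))"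
    by (simp add: tt_def power_add)
  have e3: "tt a b Q s m = qpoch a Q m * qpoch b Q (m+s) / (qpoch Q Q m * qpoch Q Q (m+s))"
    by (simp add: tt_def)
  have n1: "1 - Q * Q^m \<noteq> 0" using H by (metis power_Suc right_minus_eq zero_less_Suc)
  have n2: "1 - Q * (Q^m*Q^s) \<noteq> 0" using H
    by (metis power_Suc power_add right_minus_eq zero_less_Suc)
  have "tt a b Q s (Suc m) * (1 - Q ^ Suc m) * ?g - tt a b Q s m * (1 - Q^m) * ?g
      = tt a b Q s m - tt a b Q (Suc s) m"
    unfolding e1 e2 e3 power_Suc
    by (rule tele_alg[OF ab qpochQ_nz[OF H] qpochQ_nz[OF H]]) (use a1 bs n1 n2 in auto)
  then show ?case using Suc.IH by (simp add: algebra_simps)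
qed

lemma qpoch_inv_zero:
  assumes "Q \<noteq> (0::ratfun)" "n < m"
  shows "qpoch (inverse (Q^n)) Q m = 0"
proof -
  have "1 - inverse (Q^n) * Q^n = 0" using assms by simp
  thus ?thesis unfolding qpoch_def using assms(2) by (auto simp: prod_zero_iff)
qed

lemma sumA:
  assumes n: "0 < n" and H: "\<forall>m>0. Q ^ m \<noteq> (1::ratfun)" and Q0: "Q \<noteq> 0"
  shows "(\<Sum>k<Suc n. tt (inverse (Q^n)) (Q^Suc n) Q s k) = (\<Sum>k<Suc n. tt (inverse (Q^n)) (Q^Suc n) Q 0 k)"
proof (induction s)
  case 0 then show ?case by simp
next
  case (Suc s)
  have ab: "inverse (Q^n) * Q^Suc n = Q" using Q0 by (simp add: field_simps)
  have a1: "inverse (Q^n) \<noteq> 1" using H n by (metis inverse_1 inverse_inverse_eq)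
  have bs: "Q^Suc n * Q^s \<noteq> 1" using H by (metis power_add zero_less_Suc add_Suc)
  have z: "tt (inverse (Q^n)) (Q^Suc n) Q s (Suc n) = 0"
    unfolding tt_def using qpoch_inv_zero[OF Q0, of n "Suc n"] by simp
  have "(\<Sum>k<Suc n. tt (inverse (Q^n)) (Q^Suc n) Q s k - tt (inverse (Q^n)) (Q^Suc n) Q (Suc s) k) = 0"
    unfolding tele[OF ab a1 bs H] z by simp
  then show ?case using Suc.IH by (simp add: sum_subtractf)
qed

lemma sumB_step:
  assumes H: "\<forall>m>0. Q ^ m \<noteq> (1::ratfun)" and Q0: "Q \<noteq> 0" and s: "s < n"
  shows "(\<Sum>k<Suc n. tt (Q^Suc n) (inverse (Q^n)) Q s k) = (\<Sum>k<Suc n. tt (Q^Suc n) (inverse (Q^n)) Q (Suc s) k)"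
proof -
  have ab: "Q^Suc n * inverse (Q^n) = Q" using Q0 by (simp add: field_simps)
  have a1: "Q^Suc n \<noteq> 1" using H by blast
  have bs: "inverse (Q^n) * Q^s \<noteq> 1"
  proof
    assume "inverse (Q^n) * Q^s = 1"
    hence "Q^s = Q^n" using Q0 by (simp add: field_simps)
    also have "Q^n = Q^s * Q^(n-s)" using s by (simp add: power_add[symmetric])
    finally have "Q^(n-s) = 1" using Q0 by simp
    thus False using H s by auto
  qed
  have z: "tt (Q^Suc n) (inverse (Q^n)) Q s (Suc n) = 0"
    unfolding tt_def using qpoch_inv_zero[OF Q0, of n "Suc n + s"] by simp
  have "(\<Sum>k<Suc n. tt (Q^Suc n) (inverse (Q^n)) Q s k - tt (Q^Suc n) (inverse (Q^n)) Q (Suc s) k) = 0"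
    unfolding tele[OF ab a1 bs H] z by simp
  then show ?thesis by (simp add: sum_subtractf)
qed

lemma sumB:
  assumes H: "\<forall>m>0. Q ^ m \<noteq> (1::ratfun)" and Q0: "Q \<noteq> 0" and s: "s \<le> n"
  shows "(\<Sum>k<Suc n. tt (Q^Suc n) (inverse (Q^n)) Q s k) = qpoch (inverse (Q^n)) Q n / qpoch Q Q n"
proof -
  have gen: "\<forall>s. s + d = n \<longrightarrow> (\<Sum>k<Suc n. tt (Q^Suc n) (inverse (Q^n)) Q s k)
          = (\<Sum>k<Suc n. tt (Q^Suc n) (inverse (Q^n)) Q n k)" for d
  proof (induction d)
    case 0 then show ?case by simp
  next
    case (Suc d)
    show ?case
    proof (intro allI impI)
      fix s assume "s + Suc d = n"
      hence "s < n" "Suc s + d = n" by auto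
      thus "(\<Sum>k<Suc n. tt (Q^Suc n) (inverse (Q^n)) Q s k) = (\<Sum>k<Suc n. tt (Q^Suc n) (inverse (Q^n)) Q n k)"
        using sumB_step[OF H Q0] Suc.IH by metis
    qed
  qed
  have "(\<Sum>k<Suc n. tt (Q^Suc n) (inverse (Q^n)) Q n k) = qpoch (inverse (Q^n)) Q n / qpoch Q Q n"
  proof -
    have "\<forall>i<n. tt (Q^Suc n) (inverse (Q^n)) Q n (Suc i) = 0"
    proof (intro allI impI)
      fix i
      have "qpoch (inverse (Q^n)) Q (Suc i + n) = 0" by (rule qpoch_inv_zero[OF Q0]) simp
      thus "tt (Q^Suc n) (inverse (Q^n)) Q n (Suc i) = 0" unfolding tt_def by simp
    qed
    moreover have "tt (Q^Suc n) (inverse (Q^n)) Q n 0 = qpoch (inverse (Q^n)) Q n / qpoch Q Q n"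
      by (simp add: tt_def)
    ultimately show ?thesis unfolding sum.lessThan_Suc_shift by simp
  qed
  thus ?thesis using gen[of "n - s"] s by simp
qed

lemma prod_inv_val:
  fixes z :: ratfun
  assumes "z \<noteq> 0"
  shows "(\<Prod>i<n. (1 - inverse ((z^2)^Suc i))) = (-1)^n * qpoch (z^2) (z^2) n / z^(n*(n+1))"
proof (induction n)
  case 0 then show ?case by simp
next
  case (Suc n)
  have ee: "Suc n * (Suc n + 1) = n*(n+1) + 2*Suc n" by simp
  have e: "z^(Suc n * (Suc n + 1)) = z^(n*(n+1)) * (z^2)^Suc n"
    by (simp only: ee power_add power_mult)
  have "(\<Prod>i<Suc n. (1 - inverse ((z^2)^Suc i))) = (-1)^n * qpoch (z^2) (z^2) n / z^(n*(n+1)) * (1 - inverse ((z^2)^Suc n))"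
    using Suc.IH by simp
  also have "\<dots> = (-1)^Suc n * (qpoch (z^2) (z^2) n * (1 - z^2 * (z^2)^n)) / (z^(n*(n+1)) * (z^2)^Suc n)"
    using assms by (simp add: field_simps)
  finally show ?case by (simp only: e qpoch_Suc)
qed

lemma qpoch_inv_val:
  fixes z :: ratfun
  assumes "z \<noteq> 0"
  shows "qpoch (inverse ((z^2)^n)) (z^2) n = (-1)^n * qpoch (z^2) (z^2) n / z^(n*(n+1))"
proof -
  have "qpoch (inverse ((z^2)^n)) (z^2) n = (\<Prod>i<n. (1 - inverse ((z^2)^n) * (z^2)^(n - Suc i)))"
    unfolding qpoch_def by (rule prod.nat_diff_reindex[symmetric])
  also have "\<dots> = (\<Prod>i<n. (1 - inverse ((z^2)^Suc i)))"
  proof (rule prod.cong[OF refl])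
    fix i assume "i \<in> {..<n}"
    hence "n - Suc i + Suc i = n" by simp
    hence "(z^2)^n = (z^2)^(n - Suc i) * (z^2)^Suc i" by (metis power_add)
    thus "1 - inverse ((z^2)^n) * (z^2)^(n - Suc i) = 1 - inverse ((z^2)^Suc i)"
      using assms by (simp add: field_simps)
  qed
  finally show ?thesis using prod_inv_val[OF assms] by simp
qed

definition good :: "rat poly \<Rightarrow> ratfun \<Rightarrow> bool" where
  "good M x \<longleftrightarrow> (\<exists>a b. b \<noteq> 0 \<and> coprime b M \<and> x = to_fract a / to_fract b)"

lemma good_to_fract [simp]: "good M (to_fract a)"
  unfolding good_def by (rule exI[of _ a], rule exI[of _ 1]) simp

lemma good_0 [simp]: "good M 0" using good_to_fract[of M 0] by simp
lemma good_1 [simp]: "good M 1" using good_to_fract[of M 1] by simp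

lemma good_inv: "b \<noteq> 0 \<Longrightarrow> coprime b M \<Longrightarrow> good M (inverse (to_fract b))"
  unfolding good_def by (rule exI[of _ 1], rule exI[of _ b]) (simp add: divide_inverse)

lemma good_add: assumes "good M x" "good M y" shows "good M (x + y)"
proof -
  obtain a b where ab: "b \<noteq> 0" "coprime b M" "x = to_fract a / to_fract b" using assms(1) good_def by auto
  obtain c d where cd: "d \<noteq> 0" "coprime d M" "y = to_fract c / to_fract d" using assms(2) good_def by auto
  have "x + y = to_fract (a*d + c*b) / to_fract (b*d)" using ab cd by (simp add: field_simps)
  thus ?thesis unfolding good_def using ab cd by (intro exI[of _ "a*d+c*b"] exI[of _ "b*d"]) simp
qed

lemma good_mult: assumes "good M x" "good M y" shows "good M (x * y)"
proof -
  obtain a b where ab: "b \<noteq> 0" "coprime b M" "x = to_fract a / to_fract b" using assms(1) good_def by auto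
  obtain c d where cd: "d \<noteq> 0" "coprime d M" "y = to_fract c / to_fract d" using assms(2) good_def by auto
  have "x * y = to_fract (a*c) / to_fract (b*d)" using ab cd by (simp add: field_simps)
  thus ?thesis unfolding good_def using ab cd by (intro exI[of _ "a*c"] exI[of _ "b*d"]) simp
qed

lemma good_uminus: assumes "good M x" shows "good M (- x)"
  using good_mult[OF good_to_fract[of M "-1"] assms] by simp

lemma good_diff: "good M x \<Longrightarrow> good M y \<Longrightarrow> good M (x - y)"
  using good_add[of M x "-y"] good_uminus[of M y] by simp

lemma good_sum: "(\<And>i. i \<in> A \<Longrightarrow> good M (f i)) \<Longrightarrow> good M (\<Sum>i\<in>A. f i)"
  by (induction A rule: infinite_finite_induct) (auto intro: good_add)

lemma good_power: "good M x \<Longrightarrow> good M (x ^ m)"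
  by (induction m) (auto intro: good_mult)


lemma good_quot_snd:
  assumes "good M x" shows "coprime (snd (quot_of_fract x)) M"
proof -
  obtain a b where ab: "b \<noteq> 0" "coprime b M" "x = to_fract a / to_fract b" using assms good_def by auto
  define a' b' where "a' = fst (quot_of_fract x)" and "b' = snd (quot_of_fract x)"
  have b': "b' \<noteq> 0" unfolding b'_def by simp
  have x': "x = to_fract a' / to_fract b'" unfolding a'_def b'_def
    by (metis Fract_conv_to_fract Fract_quot_of_fract)
  have cp: "coprime a' b'" unfolding a'_def b'_def by (rule coprime_quot_of_fract)
  have "to_fract a' * to_fract b = to_fract a * to_fract b'" using ab x' b' by (simp add: field_simps)
  hence e: "a' * b = a * b'" by (metis to_fract_eq_iff to_fract_mult)
  have "b' dvd a' * b" unfolding e by simp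
  hence "b' dvd b" using cp by (simp add: coprime_commute coprime_dvd_mult_right_iff)
  thus ?thesis unfolding b'_def[symmetric] using ab(2) by (meson coprime_divisors dvd_refl)
qed

lemma good_quot_fst:
  assumes "b \<noteq> 0" "coprime b M" "x = to_fract a / to_fract b" "M dvd a"
  shows "M dvd fst (quot_of_fract x)"
proof -
  define a' b' where "a' = fst (quot_of_fract x)" and "b' = snd (quot_of_fract x)"
  have b': "b' \<noteq> 0" unfolding b'_def by simp
  have x': "x = to_fract a' / to_fract b'" unfolding a'_def b'_def
    by (metis Fract_conv_to_fract Fract_quot_of_fract)
  have "to_fract a' * to_fract b = to_fract a * to_fract b'" using assms x' b' by (simp add: field_simps)
  hence e: "a' * b = a * b'" by (metis to_fract_eq_iff to_fract_mult)
  have "M dvd a' * b" unfolding e using assms(4) by simp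
  thus ?thesis unfolding a'_def[symmetric] using assms(2)
    by (simp add: coprime_commute coprime_dvd_mult_left_iff)
qed

definition PP :: "rat poly \<Rightarrow> ratfun \<Rightarrow> ratfun \<Rightarrow> ratfun \<Rightarrow> ratfun \<Rightarrow> bool" where
  "PP M d x1 xu xv \<longleftrightarrow> good M d \<and> good M x1 \<and> good M ((xu - x1)/d) \<and> good M ((xv - x1)/d)
     \<and> good M ((xu + xv - 2*x1)/d^2)"

lemma PP_const: "good M d \<Longrightarrow> good M c \<Longrightarrow> PP M d c c c"
  unfolding PP_def by simp

lemma PP_swap: "PP M d a b c \<Longrightarrow> PP M d a c b"
  unfolding PP_def by (simp add: add.commute)

lemma PP_add:
  assumes "PP M d a1 au av" "PP M d b1 bu bv"
  shows "PP M d (a1+b1) (au+bu) (av+bv)"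
proof -
  have e1: "(au+bu - (a1+b1))/d = (au-a1)/d + (bu-b1)/d" by (simp add: diff_divide_distrib add_divide_distrib)
  have e2: "(av+bv - (a1+b1))/d = (av-a1)/d + (bv-b1)/d" by (simp add: diff_divide_distrib add_divide_distrib)
  have e3: "(au+bu + (av+bv) - 2*(a1+b1))/d^2 = (au+av-2*a1)/d^2 + (bu+bv-2*b1)/d^2"
    by (simp add: diff_divide_distrib add_divide_distrib algebra_simps)
  show ?thesis using assms unfolding PP_def e1 e2 e3 by (auto intro: good_add)
qed

lemma PP_mult:
  assumes A: "PP M d a1 au av" and B: "PP M d b1 bu bv" and d0: "d \<noteq> 0"
  shows "PP M d (a1*b1) (au*bu) (av*bv)"
proof -
  define e where "e = (au-a1)/d"
  define e' where "e' = (av-a1)/d"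
  define f where "f = (bu-b1)/d"
  define f' where "f' = (bv-b1)/d"
  define g where "g = (au+av-2*a1)/d^2"
  define h where "h = (bu+bv-2*b1)/d^2"
  have au: "au = a1 + d*e" and av: "av = a1 + d*e'" and bu: "bu = b1 + d*f" and bv: "bv = b1 + d*f'"
    using d0 unfolding e_def e'_def f_def f'_def by simp_all
  have ee: "e + e' = d * g" using d0 unfolding g_def e_def e'_def by (simp add: field_simps power2_eq_square)
  have ff: "f + f' = d * h" using d0 unfolding h_def f_def f'_def by (simp add: field_simps power2_eq_square)
  have r1: "(au*bu - a1*b1)/d = a1*f + b1*e + d*e*f" unfolding au bu using d0 by (simp add: field_simps)
  have r2: "(av*bv - a1*b1)/d = a1*f' + b1*e' + d*e'*f'" unfolding av bv using d0 by (simp add: field_simps)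
  have "au*bu + av*bv - 2*(a1*b1) = d*(a1*(f+f') + b1*(e+e')) + d^2*(e*f + e'*f')"
    unfolding au av bu bv by (simp add: algebra_simps power2_eq_square)
  also have "\<dots> = d^2*(a1*h + b1*g + e*f + e'*f')" unfolding ee ff by (simp add: algebra_simps power2_eq_square)
  finally have r3: "(au*bu + av*bv - 2*(a1*b1))/d^2 = a1*h + b1*g + e*f + e'*f'" using d0 by simp
  have gs: "good M d" "good M a1" "good M b1" "good M e" "good M e'" "good M f" "good M f'" "good M g" "good M h"
    using A B unfolding PP_def e_def e'_def f_def f'_def g_def h_def by auto
  show ?thesis unfolding PP_def r1 r2 r3 using gs by (auto intro!: good_add good_mult)
qed

lemma PP_prod:
  assumes "good M d" "d \<noteq> 0" "\<And>i. i \<in> A \<Longrightarrow> PP M d (f1 i) (fu i) (fv i)"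
  shows "PP M d (\<Prod>i\<in>A. f1 i) (\<Prod>i\<in>A. fu i) (\<Prod>i\<in>A. fv i)"
  using assms(3)
proof (induction A rule: infinite_finite_induct)
  case (infinite A) then show ?case using PP_const[OF assms(1) good_1] by simp
next
  case empty then show ?case using PP_const[OF assms(1) good_1] by simp
next
  case (insert x F) then show ?case by (simp add: PP_mult assms(2))
qed

lemma PP_sum:
  assumes "good M d" "\<And>i. i \<in> A \<Longrightarrow> PP M d (f1 i) (fu i) (fv i)"
  shows "PP M d (\<Sum>i\<in>A. f1 i) (\<Sum>i\<in>A. fu i) (\<Sum>i\<in>A. fv i)"
  using assms(2)
proof (induction A rule: infinite_finite_induct)
  case (infinite A) then show ?case using PP_const[OF assms(1) good_0] by simp
next
  case empty then show ?case using PP_const[OF assms(1) good_0] by simp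
next
  case (insert x F) then show ?case by (simp add: PP_add)
qed

lemma PP_factor:
  assumes gd: "good M (1 - u)" and gx: "good M x" and gi: "good M (inverse u)" and u0: "u \<noteq> 0" and u1: "1 - u \<noteq> 0"
  shows "PP M (1 - u) (1 - x) (1 - u*x) (1 - x*inverse u)"
proof -
  have r1: "((1 - u*x) - (1 - x))/(1-u) = x" using u1 by (simp add: field_simps)
  have r2: "((1 - x*inverse u) - (1 - x))/(1-u) = - (x * inverse u)" using u1 u0 by (simp add: field_simps)
  have n3: "(1 - u*x) + (1 - x*inverse u) - 2*(1 - x) = - (x * inverse u) * (1-u)^2"
    using u0 by (simp add: field_simps power2_eq_square)
  have r3: "((1 - u*x) + (1 - x*inverse u) - 2*(1 - x))/(1-u)^2 = - (x * inverse u)"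
    unfolding n3 using u1 by simp
  show ?thesis unfolding PP_def r1 r2 r3 using gd gx gi
    by (auto intro!: good_uminus good_mult good_diff)
qed

lemma to_fract_power: "to_fract (a ^ m) = (to_fract a) ^ m"
  by (induction m) simp_all

lemma qv_power: "qv ^ m = to_fract ([:0,1:] ^ m)"
  unfolding qv_def by (simp add: to_fract_power)

lemma dvd_pow_minus1: "(y - 1) dvd (y ^ m - (1::'a::comm_ring_1))"
  using power_diff_1_eq[of y m] by (metis dvd_triv_left)

lemma gen_dvd:
  fixes x c :: "'a::comm_ring_1"
  assumes h1: "c dvd x^j - 1" and h2: "c dvd x^p - 1" and xy: "j * a = p * b + 1"
  shows "c dvd x - 1"
proof -
  have "c dvd (x^j)^a - 1" using h1 dvd_pow_minus1[of "x^j" a] dvd_trans by blast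
  moreover have "(x^j)^a = x * (x^p)^b"
    by (simp add: power_mult[symmetric] xy power_add)
  ultimately have h3: "c dvd x * (x^p)^b - 1" by simp
  have h4: "c dvd (x^p)^b - 1" using h2 dvd_pow_minus1[of "x^p" b] dvd_trans by blast
  have "x * (x^p)^b - 1 = x * ((x^p)^b - 1) + (x - 1)" by (simp add: algebra_simps)
  thus ?thesis using h3 h4 by (metis dvd_add_right_iff dvd_mult)
qed

lemma gen_qint:
  fixes x c :: "'a::comm_ring_1"
  assumes "c dvd x - 1" "c dvd (\<Sum>i<p. x^i)"
  shows "c dvd of_nat p"
proof -
  have e1: "(\<Sum>i<p. x^i - 1) = (\<Sum>i<p. x^i) - (\<Sum>i<p. (1::'a))" by (rule sum_subtractf)
  have e2: "(\<Sum>i<p. (1::'a)) = of_nat p" by simp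
  have e: "(\<Sum>i<p. x^i) - of_nat p = (\<Sum>i<p. x^i - 1)" unfolding e1 e2 ..
  have d1: "(x - 1) dvd (\<Sum>i<p. x^i - 1)" by (rule dvd_sum) (rule dvd_pow_minus1)
  have "c dvd (\<Sum>i<p. x^i) - of_nat p" unfolding e by (rule dvd_trans[OF assms(1) d1])
  hence "c dvd (\<Sum>i<p. x^i) - ((\<Sum>i<p. x^i) - of_nat p)" using assms(2) by (rule dvd_diff[rotated])
  thus ?thesis by simp
qed

lemma gen_X:
  fixes x c :: "'a::comm_ring_1"
  assumes "c dvd x" "c dvd (\<Sum>i<p. x^i)" "0 < p"
  shows "c dvd 1"
proof -
  obtain p' where p: "p = Suc p'" using assms by (cases p) auto
  have e: "(\<Sum>i<p. x^i) = 1 + x * (\<Sum>i<p'. x^i)"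
    unfolding p sum.lessThan_Suc_shift by (simp add: sum_distrib_left)
  have "c dvd x * (\<Sum>i<p'. x^i)" using assms(1) by (rule dvd_mult2)
  with assms(2) show "c dvd 1" unfolding e by (simp add: dvd_add_left_iff)
qed

lemma gen_all:
  fixes x c :: "'a::comm_ring_1"
  assumes c1: "c dvd 1 - x^j" and c2: "c dvd (\<Sum>i<p. x^i)" and xy: "j * a = p * b + 1"
  shows "c dvd of_nat p"
proof -
  have e1: "x^j - 1 = -(1 - x^j)" by simp
  have h1: "c dvd x^j - 1" unfolding e1 dvd_minus_iff by (rule c1)
  have h2: "c dvd x^p - 1" unfolding power_diff_1_eq using c2 by (rule dvd_mult)
  have h5: "c dvd x - 1" by (rule gen_dvd[OF h1 h2 xy])
  show ?thesis by (rule gen_qint[OF h5 c2])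
qed

lemma coprime_X_qint:
  assumes "0 < p" shows "coprime [:0,1:] (qint p)"
proof (rule coprimeI)
  fix c assume "c dvd [:0,1::rat:]" "c dvd qint p"
  thus "c dvd 1" using gen_X[of c "[:0,1::rat:]" p] assms unfolding qint_def by blast
qed

lemma coprime_1mX:
  assumes pr: "prime p" and nd: "\<not> p dvd j"
  shows "coprime (1 - [:0,1:] ^ j) (qint p)"
proof (rule coprimeI)
  fix c assume c1: "c dvd 1 - [:0,1::rat:] ^ j" and c2: "c dvd qint p"
  have j0: "j \<noteq> 0" using nd by (metis dvd_0_right)
  have "coprime p j" using prime_imp_coprime[OF pr nd] .
  hence g: "gcd j p = 1" by (simp add: coprime_commute)
  obtain x y where xy: "j * x = p * y + 1" using bezout_nat[OF j0, of p] g by auto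
  have "c dvd of_nat p" using gen_all[OF c1 _ xy] c2 unfolding qint_def by blast
  moreover have "is_unit (of_nat p :: rat poly)"
    unfolding of_nat_poly is_unit_const_poly_iff using prime_gt_0_nat[OF pr] by (simp add: dvd_field_iff)
  ultimately show "is_unit c" using dvd_trans by blast
qed

lemma legendre_m1:
  assumes pr: "prime p" and od: "odd p"
  shows "Legendre (-1) (int p) = (-1) ^ ((p - 1) div 2)"
proof -
  have p2: "2 < p" using pr od prime_ge_2_nat[OF pr] by (metis le_neq_implies_less even_numeral)
  have c: "[Legendre (-1) (int p) = (-1) ^ ((p - 1) div 2)] (mod int p)"
    using euler_criterion[OF pr p2, of "-1"] by simp
  hence dv: "int p dvd Legendre (-1) (int p) - (-1) ^ ((p - 1) div 2)" by (simp add: cong_iff_dvd_diff)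
  have nc: "\<not> [-1 = 0] (mod int p)"
  proof
    assume "[-1 = 0] (mod int p)"
    hence "int p dvd 1" unfolding cong_iff_dvd_diff by simp
    thus False using p2 by simp
  qed
  have L: "Legendre (-1) (int p) = 1 \<or> Legendre (-1) (int p) = -1"
    unfolding Legendre_def using nc by auto
  have E: "(-1::int) ^ ((p - 1) div 2) = 1 \<or> (-1::int) ^ ((p - 1) div 2) = -1"
    by (metis neg_one_even_power neg_one_odd_power)
  have np: "\<not> int p dvd 2" using zdvd_imp_le[of "int p" 2] p2 by auto
  have np': "\<not> int p dvd -2" using np by simp
  show ?thesis using L E dv np np' by auto
qed

lemma not_dvd_2j:
  fixes p j :: nat
  assumes od: "odd p" and j: "0 < j" "j < p"
  shows "\<not> p dvd 2 * j"
proof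
  assume "p dvd 2 * j"
  then obtain c where c: "2 * j = p * c" by (auto elim: dvdE)
  have "c \<noteq> 0" proof assume "c = 0" thus False using c j by simp qed
  moreover have "c \<noteq> 1" using c od by (metis even_mult_iff even_numeral mult.right_neutral)
  moreover have "c < 2"
  proof (rule ccontr)
    assume "\<not> c < 2"
    hence "p * 2 \<le> p * c" by simp
    hence "p * 2 \<le> 2 * j" using c by simp
    thus False using j by simp
  qed
  ultimately show False by auto
qed

theorem theorem2p6:
  fixes p s :: nat
  assumes "prime p" and "odd p" and "s \<le> (p - 1) div 2"
  shows "qcong
    (\<Sum>k = 0..(p - 1) div 2.
        (qpoch qv (qv ^ 2) k * qpoch qv (qv ^ 2) (k + s)) /
        (qpoch (qv ^ 2) (qv ^ 2) k * qpoch (qv ^ 2) (qv ^ 2) (k + s)))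
    (of_int (Legendre (-1) (int p)) * qv powi ((1 - int p ^ 2) div 4))
    ((qint p) ^ 2)"
proof -
  note pr = assms(1) and od = assms(2)
  define n where "n = (p - 1) div 2"
  have p2: "2 \<le> p" using prime_ge_2_nat[OF pr] .
  have pn: "p = 2 * n + 1" using od unfolding n_def by presburger
  have sn: "s \<le> n" using assms(3) unfolding n_def .
  have n1: "0 < n" using pn p2 od by (cases n) auto
  define X where "X = [:0,1::rat:]"
  define M where "M = qint p"
  define Q where "Q = (qv::ratfun) ^ 2"
  define u where "u = (qv::ratfun) ^ p"
  define d where "d = 1 - u"
  have qvX: "\<And>m. qv ^ m = to_fract (X ^ m)" unfolding X_def by (rule qv_power)
  have Xne1: "\<And>k. 0 < k \<Longrightarrow> X ^ k \<noteq> 1"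
  proof
    fix k :: nat assume k: "0 < k" "X ^ k = 1"
    hence "poly (X ^ k) 2 = poly 1 (2::rat)" by simp
    hence "(2::rat) ^ k = 1" unfolding X_def by simp
    moreover have "(1::rat) < 2 ^ k" by (rule one_less_power) (use k(1) in auto)
    ultimately show False by simp
  qed
  have X0: "X \<noteq> 0" unfolding X_def by simp
  have H: "\<forall>m>0. Q ^ m \<noteq> 1"
  proof (intro allI impI)
    fix m :: nat assume m: "0 < m"
    have "Q ^ m = qv ^ (2 * m)" unfolding Q_def by (simp add: power_mult)
    also have "\<dots> = to_fract (X ^ (2 * m))" by (rule qvX)
    finally have "Q ^ m = to_fract (X ^ (2 * m))" .
    moreover have "X ^ (2 * m) \<noteq> 1" using Xne1[of "2*m"] m by simp
    ultimately show "Q ^ m \<noteq> 1" using to_fract_eq_iff[of "X ^ (2 * m)" 1] by simp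
  qed
  have qvX1: "qv = to_fract X" using qvX[of 1] by simp
  have qv0: "qv \<noteq> 0" unfolding qvX1 using X0 by simp
  have Q0: "Q \<noteq> 0" unfolding Q_def using qv0 by simp
  have uX: "u = to_fract (X ^ p)" unfolding u_def qvX ..
  have u0: "u \<noteq> 0" unfolding uX using X0 by simp
  have dX: "d = to_fract (1 - X ^ p)" unfolding d_def uX by simp
  have d0: "d \<noteq> 0" unfolding dX using Xne1[of p] p2 to_fract_eq_iff[of "X ^ p" 1] by simp
  have cXM: "coprime X M" unfolding X_def M_def using coprime_X_qint p2 by simp
  have gqv: "good M qv" unfolding qvX1 by (rule good_to_fract)
  have gui: "good M (inverse u)" unfolding uX by (rule good_inv) (use X0 cXM in auto)
  have gd: "good M d" unfolding dX by (rule good_to_fract)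
  have gfac: "\<And>j. j < 2 * n \<Longrightarrow> good M (inverse (1 - Q * Q ^ j))"
  proof -
    fix j assume j: "j < 2 * n"
    have "Q * Q ^ j = qv ^ (2 * Suc j)" unfolding Q_def by (simp only: power_Suc[symmetric] power_mult)
    also have "\<dots> = to_fract (X ^ (2 * Suc j))" by (rule qvX)
    finally have e: "1 - Q * Q ^ j = to_fract (1 - X ^ (2 * Suc j))" by simp
    have nd: "\<not> p dvd 2 * Suc j" by (rule not_dvd_2j[OF od]) (use j pn in auto)
    show "good M (inverse (1 - Q * Q ^ j))" unfolding e
      by (rule good_inv) (use Xne1[of "2 * Suc j"] coprime_1mX[OF pr nd] in \<open>auto simp: M_def X_def\<close>)
  qed
  have gDen: "\<And>j. j \<le> 2 * n \<Longrightarrow> good M (inverse (qpoch Q Q j))"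
  proof -
    fix j show "j \<le> 2 * n \<Longrightarrow> good M (inverse (qpoch Q Q j))"
    proof (induction j)
      case 0 then show ?case by simp
    next
      case (Suc j)
      then show ?case by (simp add: inverse_mult_distrib good_mult gfac)
    qed
  qed
  have eQ1: "Q ^ Suc n = u * qv"
  proof -
    have "Q ^ Suc n = qv ^ (2 * Suc n)" unfolding Q_def by (simp only: power_mult)
    also have "2 * Suc n = p + 1" using pn by simp
    also have "qv ^ (p + 1) = u * qv" unfolding u_def by simp
    finally show ?thesis .
  qed
  have eQ2: "inverse (Q ^ n) = qv * inverse u"
  proof -
    have "Q ^ n * qv = qv ^ (2 * n) * qv" unfolding Q_def by (simp only: power_mult)
    also have "\<dots> = u" unfolding u_def pn by simp
    finally have "u = Q ^ n * qv" ..
    thus ?thesis using qv0 Q0 by (simp add: field_simps)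
  qed
  have L1: "\<And>m. PP M d (qpoch qv Q m) (qpoch (Q ^ Suc n) Q m) (qpoch (inverse (Q ^ n)) Q m)"
    unfolding qpoch_def
  proof (rule PP_prod[OF gd d0])
    fix m i
    have gx: "good M (qv * Q ^ i)" unfolding Q_def by (intro good_mult good_power gqv)
    have "PP M (1 - u) (1 - qv * Q ^ i) (1 - u * (qv * Q ^ i)) (1 - (qv * Q ^ i) * inverse u)"
      by (rule PP_factor[OF _ gx gui u0]) (use gd d0 in \<open>simp_all add: d_def\<close>)
    thus "PP M d (1 - qv * Q ^ i) (1 - Q ^ Suc n * Q ^ i) (1 - inverse (Q ^ n) * Q ^ i)"
      unfolding eQ1 eQ2 d_def by (simp add: ac_simps)
  qed
  define c0 where "c0 = (-1) ^ n * inverse (qv ^ (n * (n + 1)))"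
  define t1 where "t1 k = (qpoch qv Q k * qpoch qv Q (k + s)) / (qpoch Q Q k * qpoch Q Q (k + s))" for k
  define tu where "tu k = tt (Q ^ Suc n) (inverse (Q ^ n)) Q s k" for k
  define tv where "tv k = tt (inverse (Q ^ n)) (Q ^ Suc n) Q s k" for k
  have termPP: "PP M d (t1 k) (tu k) (tv k)" if k: "k \<in> {..<Suc n}" for k
  proof -
    have gi: "good M (inverse (qpoch Q Q k * qpoch Q Q (k + s)))"
      unfolding inverse_mult_distrib using k sn by (intro good_mult gDen) auto
    have A: "PP M d (qpoch qv Q k * qpoch qv Q (k + s))
       (qpoch (Q ^ Suc n) Q k * qpoch (inverse (Q ^ n)) Q (k + s))
       (qpoch (inverse (Q ^ n)) Q k * qpoch (Q ^ Suc n) Q (k + s))"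
      by (rule PP_mult[OF L1 PP_swap[OF L1] d0])
    show ?thesis unfolding t1_def tu_def tv_def tt_def divide_inverse
      by (rule PP_mult[OF A PP_const[OF gd gi] d0])
  qed
  have PPall: "PP M d (\<Sum>k<Suc n. t1 k) (\<Sum>k<Suc n. tu k) (\<Sum>k<Suc n. tv k)"
    by (rule PP_sum[OF gd termPP])
  have V: "qpoch (inverse (Q ^ n)) Q n / qpoch Q Q n = c0"
    unfolding Q_def qpoch_inv_val[OF qv0] c0_def using qpochQ_nz[OF H, of n] unfolding Q_def
    by (simp add: field_simps)
  have Su: "(\<Sum>k<Suc n. tu k) = c0" unfolding tu_def sumB[OF H Q0 sn] V ..
  have Sv: "(\<Sum>k<Suc n. tv k) = c0"
  proof -
    have "(\<Sum>k<Suc n. tv k) = (\<Sum>k<Suc n. tt (inverse (Q ^ n)) (Q ^ Suc n) Q 0 k)"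
      unfolding tv_def by (rule sumA[OF n1 H Q0])
    also have "\<dots> = (\<Sum>k<Suc n. tt (Q ^ Suc n) (inverse (Q ^ n)) Q 0 k)"
      by (simp add: tt_def mult.commute)
    also have "\<dots> = c0" using sumB[OF H Q0, of 0] V by simp
    finally show ?thesis .
  qed
  define S1 where "S1 = (\<Sum>k<Suc n. t1 k)"
  have gS1: "good M S1" and g2: "good M ((c0 + c0 - 2 * S1) / d ^ 2)"
    using PPall unfolding PP_def Su Sv S1_def by auto
  have t2: "to_fract (2::rat poly) = 2" using to_fract_add[of "1::rat poly" 1] by simp
  have c2: "coprime (2::rat poly) M"
    by (rule is_unit_left_imp_coprime) (subst numeral_poly, simp add: is_unit_const_poly_iff dvd_field_iff)
  have g3: "good M ((S1 - c0) / d ^ 2)"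
  proof -
    have e: "(S1 - c0) / d ^ 2 = - (((c0 + c0 - 2 * S1) / d ^ 2) * inverse (to_fract 2))"
      unfolding t2 using d0 by (simp add: field_simps)
    have gi2: "good M (inverse (to_fract (2::rat poly)))" by (rule good_inv) (use c2 in simp_all)
    show ?thesis unfolding e by (intro good_uminus good_mult g2 gi2)
  qed
  then obtain a b where ab: "b \<noteq> 0" "coprime b M" "(S1 - c0) / d ^ 2 = to_fract a / to_fract b"
    unfolding good_def by auto
  have pD: "1 - X ^ p = (1 - X) * M" unfolding M_def qint_def X_def by (rule one_diff_power_eq)
  have dD: "d = to_fract ((1 - X) * M)" unfolding d_def uX pD[symmetric] by simp
  have eq: "S1 - c0 = to_fract (((1 - X) * M) ^ 2 * a) / to_fract b"
  proof -
    have "S1 - c0 = d ^ 2 * ((S1 - c0) / d ^ 2)" using d0 by simp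
    also have "\<dots> = to_fract (((1 - X) * M) ^ 2 * a) / to_fract b"
      unfolding ab(3) unfolding dD by (simp only: to_fract_mult to_fract_power times_divide_eq_right)
    finally show ?thesis .
  qed
  have gc0: "good M c0" unfolding c0_def qvX
    by (intro good_mult good_power good_uminus good_1 good_inv) (use X0 cXM in auto)
  have RHS: "of_int (Legendre (-1) (int p)) * qv powi ((1 - int p ^ 2) div 4) = c0"
  proof -
    have "1 - int p ^ 2 = 4 * (- int (n * (n + 1)))" unfolding pn by (simp add: algebra_simps power2_eq_square)
    hence e: "(1 - int p ^ 2) div 4 = - int (n * (n + 1))" by simp
    show ?thesis unfolding e legendre_m1[OF pr od] n_def[symmetric] c0_def power_int_minus power_int_of_nat
      by simp
  qed
  have LHS: "(\<Sum>k = 0..(p - 1) div 2.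
        (qpoch qv (qv ^ 2) k * qpoch qv (qv ^ 2) (k + s)) /
        (qpoch (qv ^ 2) (qv ^ 2) k * qpoch (qv ^ 2) (qv ^ 2) (k + s))) = S1"
    unfolding S1_def t1_def Q_def n_def[symmetric] atLeast0AtMost lessThan_Suc_atMost ..
  show ?thesis unfolding LHS RHS qcong_def M_def[symmetric]
  proof (intro conjI)
    show "coprime (snd (quot_of_fract S1)) (M ^ 2)" using good_quot_snd[OF gS1] by simp
    show "coprime (snd (quot_of_fract c0)) (M ^ 2)" using good_quot_snd[OF gc0] by simp
    show "M ^ 2 dvd fst (quot_of_fract (S1 - c0))"
      by (rule good_quot_fst[OF ab(1) _ eq]) (use ab(2) in \<open>simp_all add: power_mult_distrib\<close>)
  qed
qed

end
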